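(* Let $G$ be an innately transitive permutation group on a finite set $\Omega$ with plinth $M$, and let $\mathcal E\in \mathrm{CD}(G)$. Then $M_{(\mathcal E)}=M$, i.e. $M$ stabilises every partition in $\mathcal E$.
   Context: A Cartesian decomposition of a finite set $\Omega$ is a set $\mathcal E=\{\Gamma_1,\dots,\Gamma_\ell\}$ of partitions of $\Omega$ such that $|\gamma_1\cap\cdots\cap\gamma_\ell|=1$ for all $\gamma_1\in\Gamma_1,\dots,\gamma_\ell\in\Gamma_\ell$; $\ell$ is its index, and Cartesian decompositions are assumed non-trivial, i.e. $\ell\ge2$. For $G\le\mathrm{Sym}(\Omega)$, $\mathrm{CD}(G)$ is the set of Cartesian decompositions of $\Omega$ that are invariant under $G$ (i.e. $G$ permutes the partitions in $\mathcal E$ under its induced action on partitions). For $M\le G$, $M_{(\mathcal E)}$ denotes the subgroup of elements of $M$ fixing every element of $\mathcal E$. A permutation group is innately transitive if it has a transitive minimal normal subgroup, called a plinth. *)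

theory Defs
  imports "HOL-Library.Disjoint_Sets" "HOL-Combinatorics.Permutations"
begin

definition perm_group :: "'a set \<Rightarrow> ('a \<Rightarrow> 'a) set \<Rightarrow> bool" where
  "perm_group \<Omega> G \<longleftrightarrow> G \<subseteq> {p. p permutes \<Omega>} \<and> id \<in> G \<and>
     (\<forall>p\<in>G. \<forall>q\<in>G. p \<circ> q \<in> G) \<and> (\<forall>p\<in>G. inv p \<in> G)"

definition subgroup_of :: "('a \<Rightarrow> 'a) set \<Rightarrow> ('a \<Rightarrow> 'a) set \<Rightarrow> bool" where
  "subgroup_of H G \<longleftrightarrow> H \<subseteq> G \<and> id \<in> H \<and>
     (\<forall>p\<in>H. \<forall>q\<in>H. p \<circ> q \<in> H) \<and> (\<forall>p\<in>H. inv p \<in> H)"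

definition normal_subgroup_of :: "('a \<Rightarrow> 'a) set \<Rightarrow> ('a \<Rightarrow> 'a) set \<Rightarrow> bool" where
  "normal_subgroup_of N G \<longleftrightarrow> subgroup_of N G \<and>
     (\<forall>g\<in>G. \<forall>n\<in>N. g \<circ> n \<circ> inv g \<in> N)"

definition minimal_normal_subgroup :: "('a \<Rightarrow> 'a) set \<Rightarrow> ('a \<Rightarrow> 'a) set \<Rightarrow> bool" where
  "minimal_normal_subgroup M G \<longleftrightarrow> normal_subgroup_of M G \<and> M \<noteq> {id} \<and>
     (\<forall>N. normal_subgroup_of N G \<and> N \<subseteq> M \<longrightarrow> N = {id} \<or> N = M)"

definition transitive_on :: "'a set \<Rightarrow> ('a \<Rightarrow> 'a) set \<Rightarrow> bool" where
  "transitive_on \<Omega> H \<longleftrightarrow> (\<forall>x\<in>\<Omega>. \<forall>y\<in>\<Omega>. \<exists>h\<in>H. h x = y)"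

definition plinth :: "'a set \<Rightarrow> ('a \<Rightarrow> 'a) set \<Rightarrow> ('a \<Rightarrow> 'a) set \<Rightarrow> bool" where
  "plinth \<Omega> G M \<longleftrightarrow> minimal_normal_subgroup M G \<and> transitive_on \<Omega> M"

definition innately_transitive :: "'a set \<Rightarrow> ('a \<Rightarrow> 'a) set \<Rightarrow> bool" where
  "innately_transitive \<Omega> G \<longleftrightarrow> perm_group \<Omega> G \<and> (\<exists>M. plinth \<Omega> G M)"

definition cartesian_decomposition :: "'a set \<Rightarrow> 'a set set set \<Rightarrow> bool" where
  "cartesian_decomposition \<Omega> E \<longleftrightarrow>
     (\<forall>\<Gamma>\<in>E. partition_on \<Omega> \<Gamma>) \<and> finite E \<and> card E \<ge> 2 \<and>
     (\<forall>c. (\<forall>\<Gamma>\<in>E. c \<Gamma> \<in> \<Gamma>) \<longrightarrow> card (\<Inter>\<Gamma>\<in>E. c \<Gamma>) = 1)"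

definition part_image :: "('a \<Rightarrow> 'a) \<Rightarrow> 'a set set \<Rightarrow> 'a set set" where
  "part_image g \<Gamma> = (\<lambda>\<gamma>. g ` \<gamma>) ` \<Gamma>"

definition CD :: "'a set \<Rightarrow> ('a \<Rightarrow> 'a) set \<Rightarrow> 'a set set set set" where
  "CD \<Omega> G = {E. cartesian_decomposition \<Omega> E \<and> (\<forall>g\<in>G. \<forall>\<Gamma>\<in>E. part_image g \<Gamma> \<in> E)}"

definition kernel_on_CD :: "('a \<Rightarrow> 'a) set \<Rightarrow> 'a set set set \<Rightarrow> ('a \<Rightarrow> 'a) set" where
  "kernel_on_CD M E = {m\<in>M. \<forall>\<Gamma>\<in>E. part_image m \<Gamma> = \<Gamma>}"

end

theory Submission
  imports Defs "HOL-Computational_Algebra.Primes"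
begin


lemma fact_split:
  fixes p f :: nat
  assumes "prime p"
  shows "\<exists>R. fact f = p ^ (f div p) * fact (f div p) * R \<and> \<not> p dvd R"
proof -
  let ?q = "f div p"
  let ?A = "{1..f}" and ?B = "{i. p dvd i}"
  have p1: "p > 1" using assms prime_gt_1_nat by blast
  have "(fact f::nat) = \<Prod>?A" by (simp add: fact_prod)
  also have "\<dots> = prod (\<lambda>x. x) (?A \<inter> ?B) * prod (\<lambda>x. x) (?A - ?B)"
    by (rule prod.Int_Diff) simp
  finally have e1: "(fact f::nat) = prod (\<lambda>x. x) (?A \<inter> ?B) * prod (\<lambda>x. x) (?A - ?B)" .
  have img: "?A \<inter> ?B = (\<lambda>j. p*j) ` {1..?q}"
  proof (rule set_eqI, rule iffI)
    fix x assume "x \<in> ?A \<inter> ?B"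
    then obtain j where j: "x = p*j" "1 \<le> x" "x \<le> f" by auto
    hence "1 \<le> j" using p1 by (cases j) auto
    moreover have "j \<le> ?q" using j p1
      by (metis div_le_mono nonzero_mult_div_cancel_left not_one_less_zero)
    ultimately show "x \<in> (\<lambda>j. p*j) ` {1..?q}" using j by auto
  next
    fix x assume "x \<in> (\<lambda>j. p*j) ` {1..?q}"
    then obtain j where j: "x = p*j" "1 \<le> j" "j \<le> ?q" using imageE by (metis atLeastAtMost_iff)
    have "p * j \<le> p * ?q" using j by simp
    also have "\<dots> \<le> f" by simp
    finally show "x \<in> ?A \<inter> ?B" using j p1 by auto
  qed
  have "prod (\<lambda>x. x) (?A \<inter> ?B) = prod (\<lambda>j. p*j) {1..?q}"
    unfolding img using p1 by (subst prod.reindex) (auto simp: inj_on_def)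
  also have "\<dots> = p ^ ?q * fact ?q"
    by (simp add: prod.distrib fact_prod)
  finally have e2: "prod (\<lambda>x. x) (?A \<inter> ?B) = p ^ ?q * fact ?q" .
  have nd: "\<not> p dvd prod (\<lambda>x. x) (?A - ?B)"
    using assms by (subst prime_dvd_prod_iff) auto
  show ?thesis using e1 e2 nd by (intro exI[of _ "prod (\<lambda>x. x) (?A - ?B)"]) auto
qed

lemma legendre_bound:
  fixes p :: nat
  assumes "prime p"
  shows "p ^ k dvd fact f \<Longrightarrow> k = 0 \<or> k < f"
proof (induction f arbitrary: k rule: less_induct)
  case (less f)
  have p1: "p > 1" using assms prime_gt_1_nat by blast
  show ?case
  proof (cases "f = 0")
    case True
    then show ?thesis using less.prems p1 by (simp add: nat_power_eq_Suc_0_iff)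
  next
    case False
    let ?q = "f div p"
    obtain R where R: "fact f = p ^ ?q * fact ?q * R" "\<not> p dvd R"
      using fact_split[OF assms] by blast
    have qf: "?q < f" using False p1 by simp
    have q2: "2 * ?q \<le> f"
    proof -
      have "2 * ?q \<le> p * ?q" using p1 by simp
      also have "\<dots> \<le> f" by simp
      finally show ?thesis .
    qed
    show ?thesis
    proof (cases "k \<le> ?q")
      case True then show ?thesis using qf by auto
    next
      case False
      have "p ^ k = p ^ ?q * p ^ (k - ?q)" using False
        by (metis le_add_diff_inverse nat_le_linear power_add)
      hence "p ^ ?q * p ^ (k - ?q) dvd p ^ ?q * (fact ?q * R)"
        using less.prems R by (simp add: mult.assoc)
      hence d: "p ^ (k - ?q) dvd fact ?q * R" using p1 by simp
      have "coprime (p ^ (k - ?q)) R"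
        using R(2) assms by (simp add: prime_imp_coprime)
      hence "p ^ (k - ?q) dvd fact ?q" using d
        using coprime_dvd_mult_left_iff by blast
      from less.IH[OF qf this] show ?thesis using False q2 by auto
    qed
  qed
qed

lemma pow_not_dvd_fact:
  fixes n f :: nat
  assumes "n \<ge> 2" "f \<ge> 1" "n ^ f dvd fact f"
  shows False
proof -
  obtain p where p: "prime p" "p dvd n" using assms(1) prime_factor_nat[of n] by auto
  have "p ^ f dvd n ^ f" using p(2) by (simp add: dvd_power_same)
  hence "p ^ f dvd fact f" using assms(3) dvd_trans by blast
  thus False using legendre_bound[OF p(1)] assms(2) by force
qed



lemma card_fibers:
  assumes "finite A" "f ` A = B" "\<And>b. b \<in> B \<Longrightarrow> card {a\<in>A. f a = b} = k"
  shows "card A = card B * k"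
proof -
  have A: "A = (\<Union>b\<in>B. {a\<in>A. f a = b})" using assms(2) by auto
  have fB: "finite B" using assms(1,2) by auto
  have "card A = (\<Sum>b\<in>B. card {a\<in>A. f a = b})"
    by (subst A, rule card_UN_disjoint) (use fB assms(1) in auto)
  also have "\<dots> = card B * k" using assms(3) by simp
  finally show ?thesis .
qed

lemma part_image_comp: "part_image (f \<circ> g) \<Gamma> = part_image f (part_image g \<Gamma>)"
  unfolding part_image_def by (auto simp: image_comp)

lemma part_image_id[simp]: "part_image id \<Gamma> = \<Gamma>"
  unfolding part_image_def by simp

lemma orbit_card_dvd:
  assumes fin: "finite M" and perm: "\<And>m. m \<in> M \<Longrightarrow> m permutes \<Omega>"
    and cl: "\<And>p q. p \<in> M \<Longrightarrow> q \<in> M \<Longrightarrow> p \<circ> q \<in> M"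
    and ci: "\<And>p. p \<in> M \<Longrightarrow> inv p \<in> M"
    and tr: "transitive_on \<Omega> M" and w: "\<omega> \<in> \<Omega>"
  shows "card \<Omega> dvd card M"
proof -
  let ?S = "{m\<in>M. m \<omega> = \<omega>}"
  have img: "(\<lambda>m. m \<omega>) ` M = \<Omega>"
  proof
    show "(\<lambda>m. m \<omega>) ` M \<subseteq> \<Omega>" using perm w permutes_in_image by fastforce
    show "\<Omega> \<subseteq> (\<lambda>m. m \<omega>) ` M" using tr w unfolding transitive_on_def by force
  qed
  have "card M = card \<Omega> * card ?S"
  proof (rule card_fibers[OF fin img])
    fix y assume y: "y \<in> \<Omega>"
    then obtain h where h: "h \<in> M" "h \<omega> = y" using tr w unfolding transitive_on_def by blast
    have hp: "h permutes \<Omega>" using perm h(1) .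
    have eq: "{m\<in>M. m \<omega> = y} = (\<lambda>s. h \<circ> s) ` ?S"
    proof (rule set_eqI, rule iffI)
      fix m assume m: "m \<in> {m\<in>M. m \<omega> = y}"
      have "inv h \<circ> m \<in> ?S" using m h ci cl permutes_inverses(2)[OF hp] by auto
      moreover have "m = h \<circ> (inv h \<circ> m)"
        by (simp add: o_assoc permutes_inv_o(1)[OF hp])
      ultimately show "m \<in> (\<lambda>s. h \<circ> s) ` ?S" by blast
    next
      fix m assume "m \<in> (\<lambda>s. h \<circ> s) ` ?S"
      then show "m \<in> {m\<in>M. m \<omega> = y}" using h cl by auto
    qed
    have inj: "inj_on (\<lambda>s. h \<circ> s) ?S"
    proof (rule inj_onI)
      fix s t assume "h \<circ> s = h \<circ> t"
      hence "inv h \<circ> h \<circ> s = inv h \<circ> h \<circ> t" by (simp add: comp_assoc)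
      thus "s = t" by (simp add: permutes_inv_o(2)[OF hp])
    qed
    show "card {m\<in>M. m \<omega> = y} = card ?S" unfolding eq using card_image[OF inj] .
  qed
  thus ?thesis by simp
qed

lemma lagrange_perm:
  assumes finF: "finite F" and HS: "\<And>h. h \<in> H \<Longrightarrow> h permutes F"
    and idH: "id \<in> H"
    and cl: "\<And>p q. p \<in> H \<Longrightarrow> q \<in> H \<Longrightarrow> p \<circ> q \<in> H"
    and ci: "\<And>p. p \<in> H \<Longrightarrow> inv p \<in> H"
  shows "card H dvd fact (card F)"
proof -
  let ?S = "{p. p permutes F}"
  let ?f = "\<lambda>s. (\<lambda>h. h \<circ> s) ` H"
  have finS: "finite ?S" using finite_permutations[OF finF] .
  have "card ?S = card (?f ` ?S) * card H"
  proof (rule card_fibers[OF finS refl])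
    fix b assume "b \<in> ?f ` ?S"
    then obtain s0 where s0: "s0 permutes F" "b = ?f s0" by auto
    have eq: "{s\<in>?S. ?f s = b} = (\<lambda>h. h \<circ> s0) ` H"
    proof (rule set_eqI, rule iffI)
      fix s assume s: "s \<in> {s\<in>?S. ?f s = b}"
      have "s \<in> ?f s" using idH by (metis id_comp image_eqI)
      thus "s \<in> (\<lambda>h. h \<circ> s0) ` H" using s s0 by simp
    next
      fix s assume "s \<in> (\<lambda>h. h \<circ> s0) ` H"
      then obtain h where h: "h \<in> H" "s = h \<circ> s0" by auto
      have hp: "h permutes F" using HS h(1) .
      have "s permutes F" using h s0 hp permutes_compose by blast
      moreover have "?f s = ?f s0"
      proof
        show "?f s \<subseteq> ?f s0" using h cl by (auto simp: o_assoc)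
        show "?f s0 \<subseteq> ?f s"
        proof
          fix x assume "x \<in> ?f s0"
          then obtain h' where h': "h' \<in> H" "x = h' \<circ> s0" by auto
          have "x = (h' \<circ> inv h) \<circ> s" using h h'
            by (simp add: o_assoc[symmetric]) (simp add: o_assoc permutes_inv_o(2)[OF hp])
          moreover have "h' \<circ> inv h \<in> H" using h h' cl ci by blast
          ultimately show "x \<in> ?f s" by blast
        qed
      qed
      ultimately show "s \<in> {s\<in>?S. ?f s = b}" using s0 by simp
    qed
    have inj: "inj_on (\<lambda>h. h \<circ> s0) H"
    proof (rule inj_onI)
      fix s t assume "s \<circ> s0 = t \<circ> s0"
      hence "s \<circ> s0 \<circ> inv s0 = t \<circ> s0 \<circ> inv s0" by simp
      thus "s = t" by (simp add: comp_assoc permutes_inv_o(1)[OF s0(1)])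
    qed
    show "card {s\<in>?S. ?f s = b} = card H" unfolding eq using card_image[OF inj] .
  qed
  moreover have "card ?S = fact (card F)" using card_permutations[OF refl finF] .
  ultimately show ?thesis by (metis dvd_triv_right)
qed



lemma cd_card:
  fixes \<Omega> :: "'a set"
  assumes cd: "cartesian_decomposition \<Omega> E" and fin: "finite \<Omega>"
  shows "card \<Omega> = (\<Prod>\<Gamma>\<in>E. card \<Gamma>)"
proof -
  have P: "\<And>\<Gamma>. \<Gamma> \<in> E \<Longrightarrow> partition_on \<Omega> \<Gamma>" using cd unfolding cartesian_decomposition_def by blast
  have finE: "finite E" and E2: "card E \<ge> 2" using cd unfolding cartesian_decomposition_def by auto
  have one: "\<And>c. (\<forall>\<Gamma>\<in>E. c \<Gamma> \<in> \<Gamma>) \<Longrightarrow> card (\<Inter>\<Gamma>\<in>E. c \<Gamma>) = 1"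
    using cd unfolding cartesian_decomposition_def by blast
  have Ene: "E \<noteq> {}" using E2 by auto
  have U: "\<And>\<Gamma>. \<Gamma> \<in> E \<Longrightarrow> \<Union>\<Gamma> = \<Omega>" using P partition_onD1 by metis
  have uniq: "\<And>\<Gamma> x a b. \<Gamma> \<in> E \<Longrightarrow> a \<in> \<Gamma> \<Longrightarrow> b \<in> \<Gamma> \<Longrightarrow> x \<in> a \<Longrightarrow> x \<in> b \<Longrightarrow> a = b"
  proof -
    fix \<Gamma> x a b assume h: "\<Gamma> \<in> E" "a \<in> \<Gamma>" "b \<in> \<Gamma>" "x \<in> a" "x \<in> b"
    have "disjoint \<Gamma>" using P[OF h(1)] partition_onD2 by blast
    thus "a = b" using h unfolding pairwise_def disjnt_def by blast
  qed
  have ex: "\<And>\<Gamma> x. \<Gamma> \<in> E \<Longrightarrow> x \<in> \<Omega> \<Longrightarrow> \<exists>a\<in>\<Gamma>. x \<in> a"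
  proof -
    fix \<Gamma> x assume "\<Gamma> \<in> E" "x \<in> \<Omega>"
    thus "\<exists>a\<in>\<Gamma>. x \<in> a" using U[of \<Gamma>] by auto
  qed
  define blk :: "'a set set \<Rightarrow> 'a \<Rightarrow> 'a set" where "blk \<Gamma> x = (THE a. a \<in> \<Gamma> \<and> x \<in> a)" for \<Gamma> x
  have blk: "\<And>\<Gamma> x. \<Gamma> \<in> E \<Longrightarrow> x \<in> \<Omega> \<Longrightarrow> blk \<Gamma> x \<in> \<Gamma> \<and> x \<in> blk \<Gamma> x"
  proof -
    fix \<Gamma> x assume h: "\<Gamma> \<in> E" "x \<in> \<Omega>"
    obtain a where a: "a \<in> \<Gamma>" "x \<in> a" using ex[OF h] by blast
    have "blk \<Gamma> x = a" unfolding blk_def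
      by (rule the_equality) (use a uniq[OF h(1)] in auto)
    thus "blk \<Gamma> x \<in> \<Gamma> \<and> x \<in> blk \<Gamma> x" using a by simp
  qed
  have blk_eq: "\<And>\<Gamma> x a. \<Gamma> \<in> E \<Longrightarrow> a \<in> \<Gamma> \<Longrightarrow> x \<in> a \<Longrightarrow> blk \<Gamma> x = a"
    unfolding blk_def by (rule the_equality) (use uniq in auto)
  define \<phi> where "\<phi> x = restrict (\<lambda>\<Gamma>. blk \<Gamma> x) E" for x
  have "bij_betw \<phi> \<Omega> (PiE E (\<lambda>\<Gamma>. \<Gamma>))"
  proof (rule bij_betw_imageI)
    show "inj_on \<phi> \<Omega>"
    proof (rule inj_onI)
      fix x y assume x: "x \<in> \<Omega>" and y: "y \<in> \<Omega>" and e: "\<phi> x = \<phi> y"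
      let ?c = "\<lambda>\<Gamma>. blk \<Gamma> x"
      have c: "\<forall>\<Gamma>\<in>E. ?c \<Gamma> \<in> \<Gamma>" using blk x by blast
      have "x \<in> (\<Inter>\<Gamma>\<in>E. ?c \<Gamma>)" using blk x by blast
      moreover have "y \<in> (\<Inter>\<Gamma>\<in>E. ?c \<Gamma>)"
      proof
        fix \<Gamma> assume g: "\<Gamma> \<in> E"
        have "blk \<Gamma> y = blk \<Gamma> x" using e g unfolding \<phi>_def by (metis restrict_apply)
        thus "y \<in> ?c \<Gamma>" using blk[OF g y] by simp
      qed
      moreover obtain z where "(\<Inter>\<Gamma>\<in>E. ?c \<Gamma>) = {z}" using one[OF c] card_1_singletonE by blast
      ultimately show "x = y" by (metis singletonD)
    qed
    show "\<phi> ` \<Omega> = PiE E (\<lambda>\<Gamma>. \<Gamma>)"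
    proof
      show "\<phi> ` \<Omega> \<subseteq> PiE E (\<lambda>\<Gamma>. \<Gamma>)"
      proof
        fix z assume "z \<in> \<phi> ` \<Omega>"
        then obtain x where x: "x \<in> \<Omega>" "z = \<phi> x" by blast
        show "z \<in> PiE E (\<lambda>\<Gamma>. \<Gamma>)" unfolding x(2) \<phi>_def
          by (rule restrict_PiE_iff[THEN iffD2]) (use blk x(1) in blast)
      qed
      show "PiE E (\<lambda>\<Gamma>. \<Gamma>) \<subseteq> \<phi> ` \<Omega>"
      proof
        fix c assume c: "c \<in> PiE E (\<lambda>\<Gamma>. \<Gamma>)"
        hence cc: "\<forall>\<Gamma>\<in>E. c \<Gamma> \<in> \<Gamma>" by (simp add: PiE_iff)
        obtain x where x: "(\<Inter>\<Gamma>\<in>E. c \<Gamma>) = {x}" using one[OF cc] card_1_singletonE by blast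
        obtain \<Gamma>0 where g0: "\<Gamma>0 \<in> E" using Ene by blast
        have xI: "x \<in> (\<Inter>\<Gamma>\<in>E. c \<Gamma>)" using x by simp
        have "x \<in> c \<Gamma>0" using xI g0 by (rule INT_D)
        hence xO: "x \<in> \<Omega>" using U[OF g0] cc g0 by blast
        have "\<phi> x = c"
        proof
          fix \<Gamma> show "\<phi> x \<Gamma> = c \<Gamma>"
          proof (cases "\<Gamma> \<in> E")
            case True
            have "x \<in> c \<Gamma>" using xI True by (rule INT_D)
            then have "blk \<Gamma> x = c \<Gamma>" using blk_eq[OF True] cc True by blast
            then show ?thesis unfolding \<phi>_def using True by simp
          next
            case False
            then show ?thesis unfolding \<phi>_def using PiE_arb[OF c False] by simp
          qed
        qed
        thus "c \<in> \<phi> ` \<Omega>" using xO by blast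
      qed
    qed
  qed
  hence "card \<Omega> = card (PiE E (\<lambda>\<Gamma>. \<Gamma>))" by (rule bij_betw_same_card)
  also have "\<dots> = (\<Prod>\<Gamma>\<in>E. card \<Gamma>)" using card_PiE[OF finE] .
  finally show ?thesis .
qed



theorem proposition2p1:
  fixes \<Omega> :: "'a set" and G M :: "('a \<Rightarrow> 'a) set" and E :: "'a set set set"
  assumes "finite \<Omega>"
    and "innately_transitive \<Omega> G"
    and "plinth \<Omega> G M"
    and "E \<in> CD \<Omega> G"
  shows "kernel_on_CD M E = M"
proof -
  have finO: "finite \<Omega>" by fact
  have pg: "perm_group \<Omega> G" using assms(2) unfolding innately_transitive_def by blast
  have Gperm: "\<And>g. g \<in> G \<Longrightarrow> g permutes \<Omega>" using pg unfolding perm_group_def by blast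
  have Gid: "id \<in> G" and Gcl: "\<And>p q. p \<in> G \<Longrightarrow> q \<in> G \<Longrightarrow> p \<circ> q \<in> G"
    and Ginv: "\<And>p. p \<in> G \<Longrightarrow> inv p \<in> G" using pg unfolding perm_group_def by blast+
  have mn: "minimal_normal_subgroup M G" and tr: "transitive_on \<Omega> M"
    using assms(3) unfolding plinth_def by blast+
  have nM: "normal_subgroup_of M G" and Mne: "M \<noteq> {id}"
    and minim: "\<And>N. normal_subgroup_of N G \<Longrightarrow> N \<subseteq> M \<Longrightarrow> N = {id} \<or> N = M"
    using mn unfolding minimal_normal_subgroup_def by blast+
  have MG: "M \<subseteq> G" and Mid: "id \<in> M" and Mcl: "\<And>p q. p \<in> M \<Longrightarrow> q \<in> M \<Longrightarrow> p \<circ> q \<in> M"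
    and Minv: "\<And>p. p \<in> M \<Longrightarrow> inv p \<in> M"
    using nM unfolding normal_subgroup_of_def subgroup_of_def by blast+
  have Mnorm: "\<And>g n. g \<in> G \<Longrightarrow> n \<in> M \<Longrightarrow> g \<circ> n \<circ> inv g \<in> M"
    using nM unfolding normal_subgroup_of_def by blast
  have Mperm: "\<And>m. m \<in> M \<Longrightarrow> m permutes \<Omega>" using MG Gperm by blast
  have finM: "finite M"
    using finite_permutations[OF finO] Mperm by (metis mem_Collect_eq rev_finite_subset subsetI)
  have cdE: "cartesian_decomposition \<Omega> E" and Ginv_E: "\<And>g \<Gamma>. g \<in> G \<Longrightarrow> \<Gamma> \<in> E \<Longrightarrow> part_image g \<Gamma> \<in> E"
    using assms(4) unfolding CD_def by blast+
  have finE: "finite E" and Epart: "\<And>\<Gamma>. \<Gamma> \<in> E \<Longrightarrow> partition_on \<Omega> \<Gamma>"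
    using cdE unfolding cartesian_decomposition_def by blast+
  have inv_cancel: "\<And>g \<Delta>. g \<in> G \<Longrightarrow> part_image (inv g) (part_image g \<Delta>) = \<Delta>"
    by (metis Gperm part_image_comp part_image_id permutes_inv_o(2))
  have inv_cancel2: "\<And>g \<Delta>. g \<in> G \<Longrightarrow> part_image g (part_image (inv g) \<Delta>) = \<Delta>"
    by (metis Gperm part_image_comp part_image_id permutes_inv_o(1))
  have Onem: "\<Omega> \<noteq> {}"
  proof
    assume "\<Omega> = {}"
    hence "\<And>m. m \<in> M \<Longrightarrow> m = id" using Mperm by (metis permutes_empty)
    hence "M \<subseteq> {id}" by blast
    hence "M = {id}" using Mid by (metis subset_singletonD empty_iff)
    thus False using Mne by contradiction
  qed
  show ?thesis
  proof (rule ccontr)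
    assume "kernel_on_CD M E \<noteq> M"
    moreover have "kernel_on_CD M E \<subseteq> M" unfolding kernel_on_CD_def by (rule subsetI) simp
    ultimately have "\<not> M \<subseteq> kernel_on_CD M E" by (metis subset_antisym)
    then obtain m0 where "m0 \<in> M" "m0 \<notin> kernel_on_CD M E" by (metis subsetI)
    then obtain \<Gamma> where m0: "m0 \<in> M" and gE: "\<Gamma> \<in> E" and mv: "part_image m0 \<Gamma> \<noteq> \<Gamma>"
      unfolding kernel_on_CD_def by auto
    define F where "F = (\<lambda>g. part_image g \<Gamma>) ` G"
    have gF: "\<Gamma> \<in> F" unfolding F_def using Gid part_image_id by (metis image_eqI)
    have FE: "F \<subseteq> E" unfolding F_def using Ginv_E gE by blast
    have finF: "finite F" using FE finE rev_finite_subset by blast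
    have Fcl: "\<And>g \<Delta>. g \<in> G \<Longrightarrow> \<Delta> \<in> F \<Longrightarrow> part_image g \<Delta> \<in> F"
    proof -
      fix g \<Delta> assume g: "g \<in> G" and d: "\<Delta> \<in> F"
      then obtain h where h: "h \<in> G" "\<Delta> = part_image h \<Gamma>" unfolding F_def by blast
      have "part_image g \<Delta> = part_image (g \<circ> h) \<Gamma>" using h by (simp add: part_image_comp)
      thus "part_image g \<Delta> \<in> F" unfolding F_def using Gcl[OF g h(1)] by simp
    qed
    define N where "N = {m\<in>M. \<forall>\<Delta>\<in>F. part_image m \<Delta> = \<Delta>}"
    have NM: "N \<subseteq> M" unfolding N_def by blast
    have "normal_subgroup_of N G"
      unfolding normal_subgroup_of_def subgroup_of_def
    proof (intro conjI ballI)
      show "N \<subseteq> G" using NM MG by blast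
      show "id \<in> N" unfolding N_def using Mid by simp
    next
      fix p q assume p: "p \<in> N" and q: "q \<in> N"
      show "p \<circ> q \<in> N" using p q Mcl unfolding N_def by (simp add: part_image_comp)
    next
      fix p assume p: "p \<in> N"
      have pG: "p \<in> G" using p NM MG by blast
      have "\<forall>\<Delta>\<in>F. part_image (inv p) \<Delta> = \<Delta>"
      proof
        fix \<Delta> assume d: "\<Delta> \<in> F"
        have "part_image (inv p) \<Delta> = part_image (inv p) (part_image p \<Delta>)"
          using p d unfolding N_def by simp
        also have "\<dots> = \<Delta>" using inv_cancel[OF pG] .
        finally show "part_image (inv p) \<Delta> = \<Delta>" .
      qed
      thus "inv p \<in> N" using p Minv unfolding N_def by simp
    next
      fix g n assume g: "g \<in> G" and n: "n \<in> N"
      have "\<forall>\<Delta>\<in>F. part_image (g \<circ> n \<circ> inv g) \<Delta> = \<Delta>"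
      proof
        fix \<Delta> assume d: "\<Delta> \<in> F"
        have d': "part_image (inv g) \<Delta> \<in> F" using Fcl[OF Ginv[OF g] d] .
        have "part_image (g \<circ> n \<circ> inv g) \<Delta> = part_image g (part_image n (part_image (inv g) \<Delta>))"
          by (simp add: part_image_comp)
        also have "\<dots> = part_image g (part_image (inv g) \<Delta>)" using n d' unfolding N_def by simp
        also have "\<dots> = \<Delta>" using inv_cancel2[OF g] .
        finally show "part_image (g \<circ> n \<circ> inv g) \<Delta> = \<Delta>" .
      qed
      moreover have "g \<circ> n \<circ> inv g \<in> M" using Mnorm g n NM by blast
      ultimately show "g \<circ> n \<circ> inv g \<in> N" unfolding N_def by simp
    qed
    hence "N = {id} \<or> N = M" using minim NM by blast
    moreover have "m0 \<notin> N" using m0 mv gF unfolding N_def by blast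
    moreover have "N \<noteq> M" using m0 \<open>m0 \<notin> N\<close> by metis
    ultimately have Nid: "N = {id}" by metis
    define \<pi> where "\<pi> m = (\<lambda>\<Delta>. if \<Delta> \<in> F then part_image m \<Delta> else \<Delta>)" for m :: "'a \<Rightarrow> 'a"
    have \<pi>comp: "\<And>p q. p \<in> M \<Longrightarrow> q \<in> M \<Longrightarrow> \<pi> (p \<circ> q) = \<pi> p \<circ> \<pi> q"
    proof
      fix p q \<Delta> assume p: "p \<in> M" and q: "q \<in> M"
      show "\<pi> (p \<circ> q) \<Delta> = (\<pi> p \<circ> \<pi> q) \<Delta>"
      proof (cases "\<Delta> \<in> F")
        case True
        have "part_image q \<Delta> \<in> F" using Fcl True q MG by blast
        then show ?thesis using True unfolding \<pi>_def by (simp add: part_image_comp)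
      qed (simp add: \<pi>_def)
    qed
    have \<pi>id: "\<pi> id = id" unfolding \<pi>_def by (rule ext) simp
    have \<pi>perm: "\<And>m. m \<in> M \<Longrightarrow> \<pi> m permutes F"
    proof -
      fix m assume m: "m \<in> M"
      have mG: "m \<in> G" using m MG by blast
      show "\<pi> m permutes F"
      proof (rule bij_imp_permutes)
        show "bij_betw (\<pi> m) F F"
        proof (rule bij_betw_byWitness[where f'="part_image (inv m)"])
          show "\<forall>a\<in>F. part_image (inv m) (\<pi> m a) = a" unfolding \<pi>_def using inv_cancel[OF mG] by simp
          show "\<forall>a\<in>F. \<pi> m (part_image (inv m) a) = a" unfolding \<pi>_def
            using inv_cancel2[OF mG] Fcl[OF Ginv[OF mG]] by simp
          show "\<pi> m ` F \<subseteq> F" unfolding \<pi>_def using Fcl[OF mG] by auto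
          show "part_image (inv m) ` F \<subseteq> F" using Fcl[OF Ginv[OF mG]] by auto
        qed
        show "\<And>x. x \<notin> F \<Longrightarrow> \<pi> m x = x" unfolding \<pi>_def by simp
      qed
    qed
    have \<pi>inv: "\<And>m. m \<in> M \<Longrightarrow> inv (\<pi> m) = \<pi> (inv m)"
    proof -
      fix m assume m: "m \<in> M"
      have mp: "m permutes \<Omega>" using Mperm m .
      show "inv (\<pi> m) = \<pi> (inv m)"
      proof (rule inv_unique_comp)
        show "\<pi> m \<circ> \<pi> (inv m) = id"
          using \<pi>comp[OF m Minv[OF m]] permutes_inv_o(1)[OF mp] \<pi>id by simp
        show "\<pi> (inv m) \<circ> \<pi> m = id"
          using \<pi>comp[OF Minv[OF m] m] permutes_inv_o(2)[OF mp] \<pi>id by simp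
      qed
    qed
    have \<pi>inj: "inj_on \<pi> M"
    proof (rule inj_onI)
      fix p q assume p: "p \<in> M" and q: "q \<in> M" and e: "\<pi> p = \<pi> q"
      have pp: "p permutes \<Omega>" using Mperm p .
      have "\<pi> (inv p \<circ> q) = \<pi> (inv p) \<circ> \<pi> q" using \<pi>comp[OF Minv[OF p] q] .
      also have "\<dots> = \<pi> (inv p) \<circ> \<pi> p" using e by simp
      also have "\<dots> = \<pi> (inv p \<circ> p)" using \<pi>comp[OF Minv[OF p] p] by simp
      also have "\<dots> = id" using permutes_inv_o(2)[OF pp] \<pi>id by simp
      finally have k: "\<pi> (inv p \<circ> q) = id" .
      have "\<forall>\<Delta>\<in>F. part_image (inv p \<circ> q) \<Delta> = \<Delta>"
      proof
        fix \<Delta> assume d: "\<Delta> \<in> F"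
        have "\<pi> (inv p \<circ> q) \<Delta> = \<Delta>" using k by simp
        thus "part_image (inv p \<circ> q) \<Delta> = \<Delta>" using d unfolding \<pi>_def by simp
      qed
      hence "inv p \<circ> q \<in> N" unfolding N_def using Mcl[OF Minv[OF p] q] by simp
      hence "inv p \<circ> q = id" using Nid by simp
      hence "p \<circ> (inv p \<circ> q) = p" by simp
      thus "p = q" by (simp add: comp_assoc[symmetric] permutes_inv_o(1)[OF pp])
    qed
    have d1: "card (\<pi> ` M) dvd fact (card F)"
    proof (rule lagrange_perm[OF finF])
      show "\<And>h. h \<in> \<pi> ` M \<Longrightarrow> h permutes F" using \<pi>perm by blast
      show "id \<in> \<pi> ` M" using Mid \<pi>id by (metis image_eqI)
      show "\<And>p q. p \<in> \<pi> ` M \<Longrightarrow> q \<in> \<pi> ` M \<Longrightarrow> p \<circ> q \<in> \<pi> ` M"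
      proof -
        fix p q assume "p \<in> \<pi> ` M" "q \<in> \<pi> ` M"
        then obtain a b where ab: "a \<in> M" "b \<in> M" "p = \<pi> a" "q = \<pi> b" by blast
        have "p \<circ> q = \<pi> (a \<circ> b)" using ab \<pi>comp by simp
        thus "p \<circ> q \<in> \<pi> ` M" using Mcl[OF ab(1,2)] by simp
      qed
      show "\<And>p. p \<in> \<pi> ` M \<Longrightarrow> inv p \<in> \<pi> ` M"
      proof -
        fix p assume "p \<in> \<pi> ` M"
        then obtain a where a: "a \<in> M" "p = \<pi> a" by blast
        have "inv p = \<pi> (inv a)" using a \<pi>inv by simp
        thus "inv p \<in> \<pi> ` M" using Minv[OF a(1)] by simp
      qed
    qed
    have d1': "card M dvd fact (card F)" using d1 card_image[OF \<pi>inj] by simp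
    obtain \<omega> where w: "\<omega> \<in> \<Omega>" using Onem by blast
    have d2: "card \<Omega> dvd card M" using orbit_card_dvd[OF finM Mperm Mcl Minv tr w] .
    let ?n = "card \<Gamma>"
    have cardF: "\<And>\<Delta>. \<Delta> \<in> F \<Longrightarrow> card \<Delta> = ?n"
    proof -
      fix \<Delta> assume "\<Delta> \<in> F"
      then obtain g where g: "g \<in> G" "\<Delta> = part_image g \<Gamma>" unfolding F_def by blast
      have ig: "inj g" using Gperm[OF g(1)] permutes_inj by blast
      have "inj_on (\<lambda>\<gamma>. g ` \<gamma>) \<Gamma>" by (rule inj_onI) (simp add: inj_image_eq_iff[OF ig])
      hence "card ((\<lambda>\<gamma>. g ` \<gamma>) ` \<Gamma>) = card \<Gamma>" by (rule card_image)
      thus "card \<Delta> = ?n" using g(2) unfolding part_image_def by simp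
    qed
    have e1: "(\<Prod>\<Delta>\<in>F. card \<Delta>) = ?n ^ card F" using prod.cong[OF refl cardF] by simp
    have e2: "(\<Prod>\<Delta>\<in>F. card \<Delta>) dvd (\<Prod>\<Delta>\<in>E. card \<Delta>)" using prod_dvd_prod_subset[OF finE FE] .
    have e3: "card \<Omega> = (\<Prod>\<Delta>\<in>E. card \<Delta>)" using cd_card[OF cdE finO] .
    have "?n ^ card F dvd card \<Omega>" using e1 e2 e3 by simp
    hence "?n ^ card F dvd card M" using d2 by (rule dvd_trans)
    hence d3: "?n ^ card F dvd fact (card F)" using d1' by (rule dvd_trans)
    have n2: "?n \<ge> 2"
    proof -
      have pG: "partition_on \<Omega> \<Gamma>" using Epart gE .
      have UG: "\<Union>\<Gamma> = \<Omega>" using pG partition_onD1 by metis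
      have finG: "finite \<Gamma>" using finite_elements[OF finO pG] .
      have "\<Gamma> \<noteq> {}" using UG Onem by auto
      hence c0: "?n \<noteq> 0" using finG by simp
      have "?n \<noteq> 1"
      proof
        assume "?n = 1"
        then obtain B where B: "\<Gamma> = {B}" using card_1_singletonE by blast
        have "B = \<Omega>" using UG unfolding B by simp
        hence "part_image m0 \<Gamma> = {m0 ` \<Omega>}" unfolding B part_image_def by simp
        also have "m0 ` \<Omega> = \<Omega>" using permutes_image[OF Mperm[OF m0]] .
        finally show False using mv B \<open>B = \<Omega>\<close> by simp
      qed
      thus ?thesis using c0 by linarith
    qed
    have "card F \<noteq> 0" using gF finF by auto
    hence "card F \<ge> 1" by simp
    thus False using pow_not_dvd_fact[OF n2 _ d3] by blast
  qed
qed


end
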